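(* Let $\lambda=(\lambda_1,\ldots,\lambda_\ell)$ be a partition with $\ell$ positive parts, let $t$ be an integer with $0\leq t<\lambda_\ell$, and let $\mu=(\lambda_1-t,\ldots,\lambda_\ell-t)$ (the partition whose Young diagram is obtained by deleting the first $t$ columns of that of $\lambda$). Suppose $n\geq\ell$. Then the poset $\mathcal B_\mu^n$ is isomorphic to a principal order ideal in the poset $\mathcal B_\lambda^n$. In particular, if $\mathcal B_\mu^n$ is not a lattice, then $\mathcal B_\lambda^n$ is not a lattice.
   Context: For $N\geq 1$ and a partition $\nu$ with at most $N$ positive parts, $\mathcal B_\nu^N$ is the set of semistandard Young tableaux of shape $\nu$ (rows weakly increasing, columns strictly increasing) with entries in $\{1,\ldots,N+1\}$, partially ordered by the reflexive transitive closure of $T<F_i(T)$ for $i\in\{1,\ldots,N\}$ with $F_i(T)\neq 0$. Here $F_i$ is the type A crystal lowering operator: in the reading word of $T$ (rows read from bottom to top, each row left to right) keep only letters $i$ and $i+1$, replace each $i$ by ")" and each $i+1$ by "(", and match parentheses in the usual way; if there is no unmatched ")", $F_i(T)=0$; otherwise $F_i(T)$ is obtained by changing the entry $i$ corresponding to the rightmost unmatched ")" into $i+1$. *)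

theory Defs
  imports Main
begin

text \<open>Partitions are lists of positive parts, weakly decreasing (top row first).
Tableaux are lists of rows (top row first), each row a list of entries.\<close>

definition is_partition :: "nat list \<Rightarrow> bool" where
  "is_partition \<nu> \<longleftrightarrow> (\<forall>x\<in>set \<nu>. 0 < x) \<and> sorted_wrt (\<ge>) \<nu>"

definition ssyt :: "nat \<Rightarrow> nat list \<Rightarrow> nat list list \<Rightarrow> bool" where
  "ssyt N \<nu> T \<longleftrightarrow>
     map length T = \<nu> \<and>
     (\<forall>row\<in>set T. \<forall>x\<in>set row. 1 \<le> x \<and> x \<le> N + 1) \<and>
     (\<forall>row\<in>set T. sorted row) \<and>
     (\<forall>r c. Suc r < length T \<longrightarrow> c < length (T ! Suc r) \<longrightarrow> T ! r ! c < T ! Suc r ! c)"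

definition Btab :: "nat \<Rightarrow> nat list \<Rightarrow> nat list list set" where
  "Btab N \<nu> = {T. ssyt N \<nu> T}"

definition reading_word :: "nat list list \<Rightarrow> nat list" where
  "reading_word T = concat (rev T)"

text \<open>Position of the rightmost unmatched ``)'' (letter i), where letters i+1 are ``(''.
Scan left to right with c = number of currently open ``('' and r = last unmatched ``)'' seen.\<close>
fun rum :: "nat \<Rightarrow> nat list \<Rightarrow> nat \<Rightarrow> nat \<Rightarrow> nat option \<Rightarrow> nat option" where
  "rum i [] k c r = r"
| "rum i (x # xs) k c r =
     (if x = i + 1 then rum i xs (Suc k) (Suc c) r
      else if x = i then
        (if c = 0 then rum i xs (Suc k) 0 (Some k) else rum i xs (Suc k) (c - 1) r)
      else rum i xs (Suc k) c r)"

definition Fword :: "nat \<Rightarrow> nat list \<Rightarrow> nat list option" where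
  "Fword i w = (case rum i w 0 0 None of None \<Rightarrow> None | Some k \<Rightarrow> Some (w[k := i + 1]))"

fun split_lens :: "nat list \<Rightarrow> 'a list \<Rightarrow> 'a list list" where
  "split_lens [] w = []"
| "split_lens (l # ls) w = take l w # split_lens ls (drop l w)"

text \<open>Crystal lowering operator on tableaux; None represents 0.\<close>
definition Ftab :: "nat \<Rightarrow> nat list list \<Rightarrow> nat list list option" where
  "Ftab i T = map_option (\<lambda>w. rev (split_lens (rev (map length T)) w)) (Fword i (reading_word T))"

definition Bstep :: "nat \<Rightarrow> nat list \<Rightarrow> (nat list list \<times> nat list list) set" where
  "Bstep N \<nu> = {(T, T'). T \<in> Btab N \<nu> \<and> (\<exists>i\<in>{1..N}. Ftab i T = Some T')}"

definition Ble :: "nat \<Rightarrow> nat list \<Rightarrow> nat list list \<Rightarrow> nat list list \<Rightarrow> bool" where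
  "Ble N \<nu> S T \<longleftrightarrow> S \<in> Btab N \<nu> \<and> T \<in> Btab N \<nu> \<and> (S, T) \<in> (Bstep N \<nu>)\<^sup>*"

definition order_iso_onto :: "('a \<Rightarrow> 'b) \<Rightarrow> 'a set \<Rightarrow> ('a \<Rightarrow> 'a \<Rightarrow> bool) \<Rightarrow> 'b set \<Rightarrow> ('b \<Rightarrow> 'b \<Rightarrow> bool) \<Rightarrow> bool" where
  "order_iso_onto f A leA B leB \<longleftrightarrow> bij_betw f A B \<and> (\<forall>x\<in>A. \<forall>y\<in>A. leA x y \<longleftrightarrow> leB (f x) (f y))"

definition principal_ideal :: "'a set \<Rightarrow> ('a \<Rightarrow> 'a \<Rightarrow> bool) \<Rightarrow> 'a \<Rightarrow> 'a set" where
  "principal_ideal A le t = {s \<in> A. le s t}"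

definition is_lattice :: "'a set \<Rightarrow> ('a \<Rightarrow> 'a \<Rightarrow> bool) \<Rightarrow> bool" where
  "is_lattice A le \<longleftrightarrow> (\<forall>x\<in>A. \<forall>y\<in>A.
      (\<exists>z\<in>A. le x z \<and> le y z \<and> (\<forall>w\<in>A. le x w \<and> le y w \<longrightarrow> le z w)) \<and>
      (\<exists>z\<in>A. le z x \<and> le z y \<and> (\<forall>w\<in>A. le w x \<and> le w y \<longrightarrow> le w z)))"

end

theory Submission
  imports Defs
begin


fun hw :: "nat \<Rightarrow> nat list \<Rightarrow> nat \<Rightarrow> nat list option" where
  "hw i [] c = None"
| "hw i (x # xs) c =
     (if x = Suc i then map_option ((#) x) (hw i xs (Suc c))
      else if x = i then
        (if c = 0 then (case hw i xs 0 of None \<Rightarrow> Some (Suc i # xs) | Some ys \<Rightarrow> Some (x # ys))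
         else map_option ((#) x) (hw i xs (c - 1)))
      else map_option ((#) x) (hw i xs c))"

fun cs :: "nat \<Rightarrow> nat list \<Rightarrow> nat \<Rightarrow> nat" where
  "cs i [] c = c"
| "cs i (x # xs) c = (if x = Suc i then cs i xs (Suc c) else if x = i then cs i xs (c - 1) else cs i xs c)"

fun rp :: "nat \<Rightarrow> nat list \<Rightarrow> nat \<Rightarrow> nat option" where
  "rp i [] c = None"
| "rp i (x # xs) c =
     (if x = Suc i then map_option Suc (rp i xs (Suc c))
      else if x = i then
        (if c = 0 then (case rp i xs 0 of None \<Rightarrow> Some 0 | Some j \<Rightarrow> Some (Suc j))
         else map_option Suc (rp i xs (c - 1)))
      else map_option Suc (rp i xs c))"

lemma rum_rp: "rum i xs k c r = (case rp i xs c of Some j \<Rightarrow> Some (k + j) | None \<Rightarrow> r)"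
  by (induction xs arbitrary: k c r) (auto split: option.splits)

lemma hw_rp: "hw i xs c = map_option (\<lambda>j. xs[j := Suc i]) (rp i xs c)"
  by (induction xs arbitrary: c) (auto split: option.splits simp: option.map_comp o_def)

lemma Fword_hw: "Fword i w = hw i w 0"
  unfolding Fword_def rum_rp hw_rp by (auto split: option.splits)


lemma hw_length: "hw i xs c = Some ys \<Longrightarrow> length ys = length xs"
  by (induction xs arbitrary: c ys) (auto split: if_splits option.splits)

lemma cs_append: "cs i (xs @ ys) c = cs i ys (cs i xs c)"
  by (induction xs arbitrary: c) auto

lemma hw_append: "hw i (xs @ ys) c = (case hw i ys (cs i xs c) of Some zs \<Rightarrow> Some (xs @ zs)
    | None \<Rightarrow> map_option (\<lambda>us. us @ ys) (hw i xs c))"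
  by (induction xs arbitrary: c) (auto split: option.splits simp: option.map_comp o_def)

lemma hw_noi: "i \<notin> set xs \<Longrightarrow> hw i xs c = None"
  by (induction xs arbitrary: c) auto

lemma cs_noi: "i \<notin> set xs \<Longrightarrow> cs i xs c = c + count_list xs (Suc i)"
  by (induction xs arbitrary: c) auto

lemma cs_neutral: "\<forall>x\<in>set p. x \<noteq> i \<and> x \<noteq> Suc i \<Longrightarrow> cs i p c = c"
  by (induction p arbitrary: c) auto

lemma hw_neutral_app: "\<forall>x\<in>set p. x \<noteq> i \<and> x \<noteq> Suc i \<Longrightarrow> hw i (p @ xs) c = map_option (\<lambda>ys. p @ ys) (hw i xs c)"
  by (cases "hw i xs c") (auto simp: hw_append cs_neutral hw_noi)

lemma cs_neutral_app: "\<forall>x\<in>set p. x \<noteq> i \<and> x \<noteq> Suc i \<Longrightarrow> cs i (p @ xs) c = cs i xs c"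
  by (simp add: cs_append cs_neutral)

lemma cs_rep_i: "cs i (replicate t i) (c + t) = c"
  by (induction t arbitrary: c) auto

lemma cs_rep_i0: "cs i (replicate t i) 0 = 0"
  by (induction t) auto

lemma hw_rep_i: "hw i (replicate t i) (c + t) = None"
  by (induction t arbitrary: c) auto

lemma hw_rep_i0: "hw i (replicate (Suc t) i) 0 = Some (replicate t i @ [Suc i])"
proof (induction t)
  case 0
  then show ?case by simp
next
  case (Suc t)
  have "hw i (i # replicate (Suc t) i) 0 = Some (i # replicate t i @ [Suc i])"
    using Suc.IH by simp
  then show ?case by simp
qed

lemma hw_split: "hw i w c = Some w' \<Longrightarrow> \<exists>p s. w = p @ i # s \<and> w' = p @ Suc i # s \<and> cs i p c = 0 \<and> hw i s 0 = None"
proof (induction w arbitrary: c w')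
  case Nil
  then show ?case by simp
next
  case (Cons x xs)
  show ?case
  proof (cases "x = Suc i")
    case True
    with Cons.prems obtain ys where "hw i xs (Suc c) = Some ys" "w' = x # ys" by auto
    with Cons.IH obtain p s where "xs = p @ i # s \<and> ys = p @ Suc i # s \<and> cs i p (Suc c) = 0 \<and> hw i s 0 = None" by blast
    then show ?thesis using True \<open>w' = x # ys\<close> by (intro exI[of _ "x # p"] exI[of _ s]) auto
  next
    case F: False
    show ?thesis
    proof (cases "x = i")
      case True
      show ?thesis
      proof (cases "c = 0")
        case c0: True
        show ?thesis
        proof (cases "hw i xs 0")
          case None
          then show ?thesis using Cons.prems True c0 by (intro exI[of _ "[]"] exI[of _ xs]) auto
        next
          case (Some ys)
          with Cons.IH obtain p s where "xs = p @ i # s \<and> ys = p @ Suc i # s \<and> cs i p 0 = 0 \<and> hw i s 0 = None" by blast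
          then show ?thesis using Cons.prems True c0 Some by (intro exI[of _ "x # p"] exI[of _ s]) auto
        qed
      next
        case False
        with Cons.prems True F obtain ys where "hw i xs (c - 1) = Some ys" "w' = x # ys" by auto
        with Cons.IH obtain p s where "xs = p @ i # s \<and> ys = p @ Suc i # s \<and> cs i p (c - 1) = 0 \<and> hw i s 0 = None" by blast
        then show ?thesis using True F \<open>w' = x # ys\<close> by (intro exI[of _ "x # p"] exI[of _ s]) auto
      qed
    next
      case False
      with Cons.prems F obtain ys where "hw i xs c = Some ys" "w' = x # ys" by auto
      with Cons.IH obtain p s where "xs = p @ i # s \<and> ys = p @ Suc i # s \<and> cs i p c = 0 \<and> hw i s 0 = None" by blast
      then show ?thesis using False F \<open>w' = x # ys\<close> by (intro exI[of _ "x # p"] exI[of _ s]) auto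
    qed
  qed
qed

lemma hw_None_count: "hw i (q @ rest) c = None \<Longrightarrow> count_list q i \<le> c + count_list q (Suc i)"
proof (induction q arbitrary: c)
  case Nil
  then show ?case by simp
next
  case (Cons x q)
  show ?case
  proof (cases "x = Suc i")
    case True
    then show ?thesis using Cons.prems Cons.IH[of "Suc c"] by auto
  next
    case F: False
    show ?thesis
    proof (cases "x = i")
      case True
      then show ?thesis using Cons.prems Cons.IH[of "c - 1"] F by (auto split: if_splits option.splits)
    next
      case False
      then show ?thesis using Cons.prems Cons.IH[of c] F by auto
    qed
  qed
qed

lemma cs_sorted_lb: "sorted u \<Longrightarrow> count_list u (Suc i) \<le> cs i u c"
proof (induction u arbitrary: c)
  case Nil
  then show ?case by simp
next
  case (Cons x u)
  show ?case
  proof (cases "x = Suc i")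
    case True
    then have "i \<notin> set u" using Cons.prems by auto
    then show ?thesis using True cs_noi[of i u] by simp
  next
    case False
    then show ?thesis using Cons by auto
  qed
qed

fun hr :: "nat \<Rightarrow> nat list list \<Rightarrow> nat \<Rightarrow> nat list list option" where
  "hr i [] c = None"
| "hr i (row # rows) c = (case hr i rows (cs i row c) of Some rs \<Rightarrow> Some (row # rs)
      | None \<Rightarrow> map_option (\<lambda>r'. r' # rows) (hw i row c))"

lemma hr_concat: "hw i (concat rows) c = map_option concat (hr i rows c)"
  by (induction rows arbitrary: c) (auto simp: hw_append cs_append option.map_comp o_def split: option.splits)

lemma hr_len: "hr i R c = Some R' \<Longrightarrow> map length R' = map length R"
  by (induction R arbitrary: c R') (auto split: option.splits dest: hw_length)

lemma hr_append: "hr i (A @ B) c = (case hr i B (cs i (concat A) c) of Some rs \<Rightarrow> Some (A @ rs)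
    | None \<Rightarrow> map_option (\<lambda>as. as @ B) (hr i A c))"
  by (induction A arbitrary: c) (auto split: option.splits simp: cs_append option.map_comp o_def)

lemma split_lens_concat: "split_lens (map length rs) (concat rs) = rs"
  by (induction rs) auto

lemma Ftab_hr: "Ftab i T = map_option rev (hr i (rev T) 0)"
proof -
  have "Ftab i T = map_option (\<lambda>w. rev (split_lens (rev (map length T)) w)) (map_option concat (hr i (rev T) 0))"
    unfolding Ftab_def Fword_hw reading_word_def hr_concat ..
  also have "\<dots> = map_option rev (hr i (rev T) 0)"
  proof (cases "hr i (rev T) 0")
    case (Some R')
    then have "map length R' = map length (rev T)" by (rule hr_len)
    then have "rev (map length T) = map length R'" by (simp add: rev_map)
    then show ?thesis using Some by (simp add: split_lens_concat)
  qed simp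
  finally show ?thesis .
qed

lemma hr_split: "hr i R c = Some R' \<Longrightarrow> \<exists>k p s. k < length R \<and> R!k = p @ i # s \<and> R' = R[k := p @ Suc i # s]
   \<and> cs i (concat (take k R) @ p) c = 0 \<and> hw i s 0 = None"
proof (induction R arbitrary: c R')
  case Nil
  then show ?case by simp
next
  case (Cons row rows)
  show ?case
  proof (cases "hr i rows (cs i row c)")
    case (Some rs)
    then have R': "R' = row # rs" using Cons.prems by simp
    from Cons.IH[OF Some] obtain k p s where k: "k < length rows" "rows!k = p @ i # s" "rs = rows[k := p @ Suc i # s]"
      "cs i (concat (take k rows) @ p) (cs i row c) = 0" "hw i s 0 = None" by blast
    show ?thesis
      by (rule exI[of _ "Suc k"], rule exI[of _ p], rule exI[of _ s]) (use k R' in \<open>auto simp: cs_append\<close>)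
  next
    case None
    with Cons.prems obtain r' where "hw i row c = Some r'" "R' = r' # rows" by auto
    with hw_split obtain p s where "row = p @ i # s \<and> r' = p @ Suc i # s \<and> cs i p c = 0 \<and> hw i s 0 = None" by blast
    then show ?thesis using \<open>R' = r' # rows\<close>
      by (intro exI[of _ 0] exI[of _ p] exI[of _ s]) auto
  qed
qed

lemma Ftab_split: "Ftab i T = Some T' \<Longrightarrow> \<exists>r p s. r < length T \<and> T!r = p @ i # s \<and> T' = T[r := p @ Suc i # s]
   \<and> cs i (concat (rev (drop (Suc r) T)) @ p) 0 = 0 \<and> hw i s 0 = None"
proof -
  assume "Ftab i T = Some T'"
  then obtain R' where R': "hr i (rev T) 0 = Some R'" "T' = rev R'" by (auto simp: Ftab_hr)
  from hr_split[OF R'(1)] obtain k p s where k: "k < length (rev T)" "rev T!k = p @ i # s"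
    "R' = (rev T)[k := p @ Suc i # s]" "cs i (concat (take k (rev T)) @ p) 0 = 0" "hw i s 0 = None" by blast
  define r where "r = length T - Suc k"
  have r: "r < length T" "k = length T - Suc r" using k(1) unfolding r_def by auto
  have "T!r = p @ i # s" using k(2) r by (simp add: rev_nth)
  moreover have "T' = T[r := p @ Suc i # s]"
  proof -
    have "T' = rev ((rev T)[k := p @ Suc i # s])" using k(3) R'(2) by simp
    also have "\<dots> = (rev (rev T))[length (rev T) - k - 1 := p @ Suc i # s]"
      using k(1) by (rule rev_update)
    also have "\<dots> = T[r := p @ Suc i # s]" using r by simp
    finally show ?thesis .
  qed
  moreover have "take k (rev T) = rev (drop (Suc r) T)" using r by (simp add: take_rev)
  ultimately show ?thesis using r k by auto
qed

lemma Ftab_None: "Ftab i T = None \<Longrightarrow> hw i (concat (rev T)) 0 = None"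
  by (simp add: Ftab_hr hr_concat)



lemma ssyt_shape: "ssyt N \<nu> S \<Longrightarrow> length S = length \<nu> \<and> (\<forall>r<length S. length (S!r) = \<nu>!r)"
  unfolding ssyt_def by (metis length_map nth_map)

lemma part_mono: "is_partition \<nu> \<Longrightarrow> r \<le> r' \<Longrightarrow> r' < length \<nu> \<Longrightarrow> \<nu>!r' \<le> \<nu>!r"
  unfolding is_partition_def
  by (metis le_neq_implies_less order_refl sorted_wrt_nth_less)

lemma ssyt_row_ge: "is_partition \<nu> \<Longrightarrow> ssyt N \<nu> S \<Longrightarrow> r < length S \<Longrightarrow> c < length (S!r) \<Longrightarrow> Suc r \<le> S!r!c"
proof (induction r arbitrary: c)
  case 0
  then show ?case unfolding ssyt_def by (metis Suc_eq_plus1 add_0 nth_mem)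
next
  case (Suc r)
  have sh: "length S = length \<nu>" "\<And>r. r<length S \<Longrightarrow> length (S!r) = \<nu>!r" using ssyt_shape[OF Suc.prems(2)] by auto
  have "c < length (S!r)" using Suc.prems sh part_mono[OF Suc.prems(1), of r "Suc r"] by auto
  then have "Suc r \<le> S!r!c" using Suc by auto
  moreover have "S!r!c < S!Suc r!c" using Suc.prems unfolding ssyt_def by blast
  ultimately show ?case by simp
qed

lemma count_take_le: "count_list (take n xs) x \<le> count_list xs x"
  by (metis append_take_drop_id count_list_append le_add1)

lemma below_arg:
  assumes su: "sorted u" and sp: "sorted (p @ i # s)" and len: "length p < length u"
    and col: "\<forall>k < length p. p!k < u!k" and uc: "u!(length p) = Suc i"
  shows "0 < cs i p (cs i u c0)"
proof -
  let ?col = "length p"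
  have pk: "\<And>k. k < ?col \<Longrightarrow> p!k \<le> i" using sp by (auto simp: sorted_append)
  have claim: "k \<le> ?col \<Longrightarrow> count_list (take (?col + 1 - k) (drop k u)) (Suc i) \<le> cs i (take k p) (cs i u c0)" for k
  proof (induction k)
    case 0
    then show ?case using count_take_le[of "?col+1" u "Suc i"] cs_sorted_lb[OF su, of i c0] by simp
  next
    case (Suc k)
    then have k: "k < ?col" by simp
    have ku: "k < length u" using k len by simp
    have dr: "drop k u = u!k # drop (Suc k) u" using ku by (simp add: Cons_nth_drop_Suc)
    have tk: "take (?col + 1 - k) (drop k u) = u!k # take (?col - k) (drop (Suc k) u)"
      using k dr by (simp add: Suc_diff_le)
    have tp: "take (Suc k) p = take k p @ [p!k]" using k by (simp add: take_Suc_conv_app_nth)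
    define X where "X = cs i (take k p) (cs i u c0)"
    have IH: "count_list (take (?col + 1 - k) (drop k u)) (Suc i) \<le> X" using Suc k unfolding X_def by simp
    have eq: "cs i (take (Suc k) p) (cs i u c0) = cs i [p!k] X" unfolding tp X_def cs_append ..
    show ?case
    proof (cases "p!k = i")
      case True
      have "u!k \<le> u!?col" using su k len by (simp add: sorted_nth_mono)
      moreover have "i < u!k" using col k True by metis
      ultimately have "u!k = Suc i" using uc by simp
      then show ?thesis using IH tk eq True by simp
    next
      case False
      then have "p!k \<noteq> Suc i" using pk[OF k] by simp
      then show ?thesis using IH tk eq False by (simp split: if_splits)
    qed
  qed
  have "count_list (take 1 (drop ?col u)) (Suc i) = 1"
    using len uc by (simp add: Cons_nth_drop_Suc[symmetric])
  then show ?thesis using claim[of ?col] by simp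
qed


lemma Ftab_ssyt:
  assumes sy: "ssyt N \<nu> S" and pa: "is_partition \<nu>" and i: "1 \<le> i" "i \<le> N" and F: "Ftab i S = Some S'"
  shows "ssyt N \<nu> S'"
proof -
  obtain r p s where rps: "r < length S" "S!r = p @ i # s" "S' = S[r := p @ Suc i # s]"
    "cs i (concat (rev (drop (Suc r) S)) @ p) 0 = 0" "hw i s 0 = None"
    using Ftab_split[OF F] by blast
  have sh: "length S = length \<nu>" "\<And>r. r<length S \<Longrightarrow> length (S!r) = \<nu>!r" using ssyt_shape[OF sy] by auto
  have ent: "\<forall>row\<in>set S. \<forall>x\<in>set row. 1 \<le> x \<and> x \<le> N + 1" and srt: "\<forall>row\<in>set S. sorted row"
    and colS: "\<forall>r c. Suc r < length S \<longrightarrow> c < length (S ! Suc r) \<longrightarrow> S ! r ! c < S ! Suc r ! c"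
    using sy unfolding ssyt_def by auto
  have rowr: "S!r \<in> set S" using rps(1) by simp
  have sr: "sorted (p @ i # s)" using srt rowr rps(2) by metis
  have s_not: "\<forall>s'. s \<noteq> i # s'" using rps(5) by (auto split: option.splits)
  have snew: "sorted (p @ Suc i # s)"
  proof -
    have "\<forall>x\<in>set s. i \<le> x" using sr by (simp add: sorted_append)
    moreover have "sorted s" using sr by (simp add: sorted_append)
    moreover have "\<forall>x\<in>set s. x \<noteq> i"
    proof (cases s)
      case (Cons y ys)
      then have "y \<noteq> i" using s_not by auto
      moreover have "\<forall>x\<in>set ys. y \<le> x" using \<open>sorted s\<close> Cons by simp
      moreover have "i \<le> y" using sr Cons by (simp add: sorted_append)
      ultimately show ?thesis using Cons by force
    qed simp
    ultimately have "\<forall>x\<in>set s. Suc i \<le> x" by force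
    moreover have "\<forall>x\<in>set p. x \<le> i" using sr by (simp add: sorted_append)
    ultimately show ?thesis using \<open>sorted s\<close> sr by (auto simp: sorted_append)
  qed
  have len': "length S' = length S" using rps(3) by simp
  have nth': "\<And>k. k < length S \<Longrightarrow> S'!k = (if k = r then p @ Suc i # s else S!k)" using rps(3) by simp
  have lrow: "length (p @ Suc i # s) = length (S!r)" using rps(2) by simp
  have ge: "\<And>k c. k < length S \<Longrightarrow> c < length (S!k) \<Longrightarrow> S!k!c \<le> S'!k!c"
  proof -
    fix k c assume "k < length S" "c < length (S!k)"
    then show "S!k!c \<le> S'!k!c" using nth' rps(2)
      by (cases "k = r") (auto simp: nth_append nth_Cons split: nat.splits)
  qed
  have shape': "map length S' = \<nu>"
    using sy rps(3) lrow unfolding ssyt_def by (metis map_update list_update_id)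
  have ent': "\<forall>row\<in>set S'. \<forall>x\<in>set row. 1 \<le> x \<and> x \<le> N + 1"
  proof
    fix row assume "row \<in> set S'"
    then have "row \<in> set S \<or> row = p @ Suc i # s" using rps(3) set_update_subset_insert by fastforce
    moreover have "\<forall>x\<in>set (p @ i # s). 1 \<le> x \<and> x \<le> N + 1" using ent rowr rps(2) by metis
    ultimately show "\<forall>x\<in>set row. 1 \<le> x \<and> x \<le> N + 1" using ent i by auto
  qed
  have srt': "\<forall>row\<in>set S'. sorted row"
  proof
    fix row assume "row \<in> set S'"
    then have "row \<in> set S \<or> row = p @ Suc i # s" using rps(3) set_update_subset_insert by fastforce
    then show "sorted row" using srt snew by auto
  qed
  have col': "\<forall>r' c. Suc r' < length S' \<longrightarrow> c < length (S' ! Suc r') \<longrightarrow> S' ! r' ! c < S' ! Suc r' ! c"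
  proof (intro allI impI)
    fix r' c assume a: "Suc r' < length S'" "c < length (S' ! Suc r')"
    have a': "Suc r' < length S" "c < length (S ! Suc r')" using a len' nth' lrow by (auto split: if_splits)
    have cS: "S!r'!c < S!Suc r'!c" using colS a' by blast
    show "S' ! r' ! c < S' ! Suc r' ! c"
    proof (cases "r' = r")
      case False
      then have "S'!r'!c = S!r'!c" using nth' a' by simp
      moreover have "S!Suc r'!c \<le> S'!Suc r'!c" using ge a' by simp
      ultimately show ?thesis using cS by simp
    next
      case True
      have Sr': "S'!Suc r' = S!Suc r'" using nth' a' True by simp
      show ?thesis
      proof (cases "c = length p")
        case False
        then have "S'!r'!c = S!r'!c" using nth' a' True rps(2) by (auto simp: nth_append nth_Cons split: nat.splits)
        then show ?thesis using cS Sr' by simp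
      next
        case cp: True
        let ?u = "S!Suc r"
        have "S!r!c = i" using rps(2) cp by simp
        then have ilt: "i < ?u!c" using cS True by simp
        have "?u!c \<noteq> Suc i"
        proof
          assume uc: "?u!c = Suc i"
          have su: "sorted ?u" using srt a' True by simp
          have lenu: "length p < length ?u" using a' cp True by simp
          have colp: "\<forall>k < length p. p!k < ?u!k"
          proof (intro allI impI)
            fix k assume "k < length p"
            then have "k < length ?u" using lenu by simp
            then have "S!r!k < ?u!k" using colS a' True by blast
            then show "p!k < ?u!k" using rps(2) \<open>k < length p\<close> by (simp add: nth_append)
          qed
          have dd: "drop (Suc r) S = ?u # drop (Suc (Suc r)) S" using a' True by (simp add: Cons_nth_drop_Suc)
          have "0 < cs i p (cs i ?u (cs i (concat (rev (drop (Suc (Suc r)) S))) 0))"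
            using below_arg[OF su sr lenu colp] uc cp by simp
          moreover have "cs i (concat (rev (drop (Suc r) S)) @ p) 0 = cs i p (cs i ?u (cs i (concat (rev (drop (Suc (Suc r)) S))) 0))"
            unfolding dd by (simp add: cs_append)
          ultimately show False using rps(4) by simp
        qed
        then have "Suc i < ?u!c" using ilt by simp
        moreover have "S'!r'!c = Suc i" using nth' a' True cp by simp
        ultimately show ?thesis using Sr' True by simp
      qed
    qed
  qed
  show ?thesis unfolding ssyt_def using shape' ent' srt' col' by blast
qed

definition wt :: "nat list list \<Rightarrow> nat" where "wt S = sum_list (map sum_list S)"

lemma Ftab_wt: "Ftab i S = Some S' \<Longrightarrow> wt S' = Suc (wt S)"
proof -
  assume F: "Ftab i S = Some S'"
  obtain r p s where rps: "r < length S" "S!r = p @ i # s" "S' = S[r := p @ Suc i # s]"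
    using Ftab_split[OF F] by blast
  have e1: "S = take r S @ S!r # drop (Suc r) S" using rps(1) by (simp add: id_take_nth_drop)
  have e2: "S' = take r S @ (p @ Suc i # s) # drop (Suc r) S" using rps by (simp add: upd_conv_take_nth_drop)
  have "wt (take r S @ S!r # drop (Suc r) S) = sum_list (map sum_list (take r S)) + sum_list (p @ i # s) + sum_list (map sum_list (drop (Suc r) S))"
    using rps(2) by (simp add: wt_def)
  moreover have "wt (take r S @ (p @ Suc i # s) # drop (Suc r) S) = sum_list (map sum_list (take r S)) + sum_list (p @ Suc i # s) + sum_list (map sum_list (drop (Suc r) S))"
    by (simp add: wt_def)
  ultimately show ?thesis using e1 e2 by simp
qed

lemma wt_bound_row: "\<forall>x\<in>set row. x \<le> B \<Longrightarrow> sum_list row \<le> B * length row"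
  by (induction row) auto

lemma wt_bound: "ssyt N \<nu> S \<Longrightarrow> wt S \<le> (N+1) * sum_list \<nu>"
proof -
  assume sy: "ssyt N \<nu> S"
  have "\<forall>row\<in>set S. \<forall>x\<in>set row. x \<le> N + 1" using sy unfolding ssyt_def by auto
  then have "sum_list (map sum_list S) \<le> (N+1) * sum_list (map length S)"
  proof (induction S)
    case (Cons a S)
    have "sum_list a \<le> (N+1) * length a" using Cons.prems wt_bound_row[of a "N+1"] by simp
    then show ?case using Cons by (simp add: distrib_left)
  qed simp
  then show ?thesis using sy unfolding wt_def ssyt_def by simp
qed



definition ht :: "nat list \<Rightarrow> nat \<Rightarrow> nat" where "ht \<nu> c = length (filter (\<lambda>l. c < l) \<nu>)"

definition LW :: "nat \<Rightarrow> nat list \<Rightarrow> nat list list" where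
  "LW N \<nu> = map (\<lambda>r. map (\<lambda>c. N + 2 + r - ht \<nu> c) [0..<\<nu>!r]) [0..<length \<nu>]"

lemma part_tl: "is_partition (k # \<nu>) \<Longrightarrow> is_partition \<nu> \<and> (\<forall>l\<in>set \<nu>. l \<le> k)"
  unfolding is_partition_def by auto

lemma ht_cons: "ht (k # \<nu>) c = (if c < k then 1 else 0) + ht \<nu> c"
  unfolding ht_def by simp

lemma ht_nil: "ht [] c = 0" unfolding ht_def by simp

lemma ht_le_len: "ht \<nu> c \<le> length \<nu>" unfolding ht_def by simp

lemma ht_anti: "c \<le> c' \<Longrightarrow> ht \<nu> c' \<le> ht \<nu> c"
  unfolding ht_def by (induction \<nu>) auto

lemma ht_cell: "is_partition \<nu> \<Longrightarrow> (Suc r \<le> ht \<nu> c \<longleftrightarrow> r < length \<nu> \<and> c < \<nu>!r)"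
proof (induction \<nu> arbitrary: r)
  case Nil
  then show ?case by (simp add: ht_nil)
next
  case (Cons k \<nu>)
  have p: "is_partition \<nu>" "\<forall>l\<in>set \<nu>. l \<le> k" using part_tl[OF Cons.prems] by auto
  show ?case
  proof (cases "c < k")
    case True
    then show ?thesis using Cons.IH[OF p(1)] by (cases r) (auto simp: ht_cons)
  next
    case False
    then have "ht \<nu> c = 0" using p(2) unfolding ht_def by (auto simp: filter_empty_conv)
    moreover have "\<forall>r < length (k # \<nu>). (k#\<nu>)!r \<le> c"
    proof (intro allI impI)
      fix r assume "r < length (k # \<nu>)"
      then have "(k#\<nu>)!r \<in> set (k#\<nu>)" by (rule nth_mem)
      then show "(k#\<nu>)!r \<le> c" using p(2) False by auto
    qed
    ultimately show ?thesis using False by (auto simp: ht_cons)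
  qed
qed

lemma LW_nil: "LW N [] = []" unfolding LW_def by simp

lemma LW_cons: "is_partition (k # \<nu>) \<Longrightarrow> LW N (k # \<nu>) = map (\<lambda>c. N + 2 - ht (k # \<nu>) c) [0..<k] # LW N \<nu>"
proof -
  assume pa: "is_partition (k # \<nu>)"
  have p: "is_partition \<nu>" "\<forall>l\<in>set \<nu>. l \<le> k" using part_tl[OF pa] by auto
  have "LW N (k # \<nu>) = map (\<lambda>r. map (\<lambda>c. N + 2 + r - ht (k#\<nu>) c) [0..<(k#\<nu>)!r]) (0 # map Suc [0..<length \<nu>])"
    unfolding LW_def by (simp add: upt_conv_Cons map_Suc_upt del: upt_Suc)
  also have "\<dots> = map (\<lambda>c. N + 2 - ht (k # \<nu>) c) [0..<k] # LW N \<nu>"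
  proof -
    have "\<And>r c. r < length \<nu> \<Longrightarrow> c < \<nu>!r \<Longrightarrow> N + 2 + Suc r - ht (k#\<nu>) c = N + 2 + r - ht \<nu> c"
    proof -
      fix r c assume "r < length \<nu>" "c < \<nu>!r"
      then have "c < k" using p(2) nth_mem by fastforce
      then show "N + 2 + Suc r - ht (k#\<nu>) c = N + 2 + r - ht \<nu> c" by (simp add: ht_cons)
    qed
    then show ?thesis unfolding LW_def by simp
  qed
  finally show ?thesis .
qed

lemma count_map_upt: "count_list (map f [0..<n]) y = card {c. c < n \<and> f c = y}"
proof -
  have "count_list (map f [0..<n]) y = card {i. i < length (map f [0..<n]) \<and> y = (map f [0..<n])!i}"
    unfolding count_list_eq_length_filter by (rule length_filter_conv_card)
  also have "{i. i < length (map f [0..<n]) \<and> y = (map f [0..<n])!i} = {c. c < n \<and> f c = y}"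
    by auto
  finally show ?thesis .
qed

lemma count_concat: "count_list (concat xs) y = sum_list (map (\<lambda>r. count_list r y) xs)"
  by (induction xs) auto

lemma count_concat_rev: "count_list (concat (rev xs)) y = count_list (concat xs) y"
  by (simp add: count_concat rev_map[symmetric])

lemma LW_count: "is_partition \<kappa> \<Longrightarrow> 1 \<le> y \<Longrightarrow> y \<le> N \<Longrightarrow>
  count_list (concat (LW N \<kappa>)) (Suc y) = count_list (concat (LW N \<kappa>)) y + card {c. ht \<kappa> c = N + 1 - y}"
proof (induction \<kappa>)
  case Nil
  then show ?case by (simp add: LW_nil ht_nil)
next
  case (Cons k \<kappa>)
  have p: "is_partition \<kappa>" "\<forall>l\<in>set \<kappa>. l \<le> k" using part_tl[OF Cons.prems(1)] by auto
  let ?h = "ht (k # \<kappa>)"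
  have ge1: "\<And>c. 1 \<le> ?h c \<Longrightarrow> c < k"
    using ht_cell[OF Cons.prems(1), of 0] by simp
  have ge1': "\<And>c. 1 \<le> ht \<kappa> c \<Longrightarrow> c < k"
  proof -
    fix c assume "1 \<le> ht \<kappa> c"
    then have "0 < length \<kappa> \<and> c < \<kappa>!0" using ht_cell[OF p(1), of 0] by simp
    then show "c < k" using p(2) nth_mem by fastforce
  qed
  have A1: "{c. c < k \<and> N + 2 - ?h c = Suc y} = {c. ?h c = N + 1 - y}"
  proof (intro set_eqI iffI)
    fix c assume "c \<in> {c. c < k \<and> N + 2 - ?h c = Suc y}"
    then show "c \<in> {c. ?h c = N + 1 - y}" using Cons.prems by auto
  next
    fix c assume "c \<in> {c. ?h c = N + 1 - y}"
    then have "?h c = N + 1 - y" by simp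
    moreover have "c < k" using ge1 calculation Cons.prems by simp
    ultimately show "c \<in> {c. c < k \<and> N + 2 - ?h c = Suc y}" using Cons.prems by auto
  qed
  have A2: "{c. c < k \<and> N + 2 - ?h c = y} = {c. ht \<kappa> c = N + 1 - y}"
  proof (intro set_eqI iffI)
    fix c assume "c \<in> {c. c < k \<and> N + 2 - ?h c = y}"
    then show "c \<in> {c. ht \<kappa> c = N + 1 - y}" using Cons.prems by (auto simp: ht_cons)
  next
    fix c assume "c \<in> {c. ht \<kappa> c = N + 1 - y}"
    then have "ht \<kappa> c = N + 1 - y" by simp
    moreover have "c < k" using ge1' calculation Cons.prems by simp
    ultimately show "c \<in> {c. c < k \<and> N + 2 - ?h c = y}" using Cons.prems by (auto simp: ht_cons)
  qed
  let ?R = "concat (LW N \<kappa>)"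
  have cc: "concat (LW N (k # \<kappa>)) = map (\<lambda>c. N + 2 - ?h c) [0..<k] @ ?R"
    by (simp add: LW_cons[OF Cons.prems(1)])
  have c1: "count_list (concat (LW N (k # \<kappa>))) (Suc y) = card {c. ?h c = N + 1 - y} + count_list ?R (Suc y)"
    unfolding cc count_list_append count_map_upt A1 ..
  have c2: "count_list (concat (LW N (k # \<kappa>))) y = card {c. ht \<kappa> c = N + 1 - y} + count_list ?R y"
    unfolding cc count_list_append count_map_upt A2 ..
  show ?case using c1 c2 Cons.IH[OF p(1) Cons.prems(2,3)] by simp
qed



lemma ssyt_tail: "ssyt N (k # \<nu>) (row0 # S') \<Longrightarrow> ssyt N \<nu> S'"
  unfolding ssyt_def
proof (intro conjI allI impI)
  assume a: "map length (row0 # S') = k # \<nu> \<and>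
    (\<forall>row\<in>set (row0 # S'). \<forall>x\<in>set row. 1 \<le> x \<and> x \<le> N + 1) \<and>
    (\<forall>row\<in>set (row0 # S'). sorted row) \<and>
    (\<forall>r c. Suc r < length (row0 # S') \<longrightarrow> c < length ((row0 # S') ! Suc r) \<longrightarrow> (row0 # S') ! r ! c < (row0 # S') ! Suc r ! c)"
  then show "map length S' = \<nu>" by simp
  from a show "\<forall>row\<in>set S'. \<forall>x\<in>set row. 1 \<le> x \<and> x \<le> N + 1" by simp
  from a show "\<forall>row\<in>set S'. sorted row" by simp
  fix r c assume "Suc r < length S'" "c < length (S' ! Suc r)"
  then show "S' ! r ! c < S' ! Suc r ! c" using a[THEN conjunct2, THEN conjunct2, THEN conjunct2, rule_format, of "Suc r" c] by simp
qed

lemma LW_unique: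
  "ssyt N \<nu> S \<Longrightarrow> is_partition \<nu> \<Longrightarrow>
   (\<forall>i. 1 \<le> i \<longrightarrow> i \<le> N \<longrightarrow> (\<forall>q rest. concat (rev S) = q @ rest \<longrightarrow> count_list q i \<le> count_list q (Suc i)))
   \<Longrightarrow> S = LW N \<nu>"
proof (induction S arbitrary: \<nu>)
  case Nil
  then have "\<nu> = []" unfolding ssyt_def by simp
  then show ?case by (simp add: LW_nil)
next
  case (Cons row0 S')
  define k where "k = length row0"
  define \<nu>' where "\<nu>' = map length S'"
  have nu: "\<nu> = k # \<nu>'" using Cons.prems(1) unfolding ssyt_def k_def \<nu>'_def by simp
  have sy': "ssyt N \<nu>' S'" using Cons.prems(1) nu ssyt_tail by simp
  have pa: "is_partition (k # \<nu>')" using Cons.prems(2) nu by simp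
  have pa': "is_partition \<nu>'" "\<forall>l\<in>set \<nu>'. l \<le> k" using part_tl[OF pa] by auto
  have pre': "\<forall>i. 1 \<le> i \<longrightarrow> i \<le> N \<longrightarrow> (\<forall>q rest. concat (rev S') = q @ rest \<longrightarrow> count_list q i \<le> count_list q (Suc i))"
  proof (intro allI impI)
    fix i q rest assume "1 \<le> i" "i \<le> N" "concat (rev S') = q @ rest"
    then have "concat (rev (row0 # S')) = q @ (rest @ row0)" by simp
    then show "count_list q i \<le> count_list q (Suc i)" using Cons.prems(3) \<open>1 \<le> i\<close> \<open>i \<le> N\<close> by blast
  qed
  have IH: "S' = LW N \<nu>'" using Cons.IH[OF sy' pa'(1) pre'] .
  let ?h = "ht (k # \<nu>')"
  have ent: "\<forall>x\<in>set row0. 1 \<le> x \<and> x \<le> N + 1" using Cons.prems(1) unfolding ssyt_def by simp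
  have srt: "sorted row0" using Cons.prems(1) unfolding ssyt_def by simp
  have colS: "\<And>c. S' \<noteq> [] \<Longrightarrow> c < length (S'!0) \<Longrightarrow> row0!c < S'!0!c"
  proof -
    fix c assume "S' \<noteq> []" "c < length (S'!0)"
    have "\<forall>r c. Suc r < length (row0 # S') \<longrightarrow> c < length ((row0 # S') ! Suc r) \<longrightarrow> (row0 # S') ! r ! c < (row0 # S') ! Suc r ! c"
      using Cons.prems(1) unfolding ssyt_def by blast
    then have "Suc 0 < length (row0 # S') \<longrightarrow> c < length ((row0 # S') ! Suc 0) \<longrightarrow> (row0 # S') ! 0 ! c < (row0 # S') ! Suc 0 ! c"
      by blast
    then show "row0!c < S'!0!c" using \<open>S' \<noteq> []\<close> \<open>c < length (S'!0)\<close> by simp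
  qed
  have row: "\<forall>c<k. row0!c = N + 2 - ?h c"
  proof (intro allI)
    fix c show "c < k \<longrightarrow> row0!c = N + 2 - ?h c"
    proof (induction c rule: less_induct)
      case (less c)
      show ?case
      proof
        assume ck: "c < k"
        let ?x = "row0!c"
        have x1: "1 \<le> ?x" "?x \<le> N + 1" using ent ck k_def by auto
        have hc: "?h c = 1 + ht \<nu>' c" using ck by (simp add: ht_cons)
        have upper: "?x \<le> N + 2 - ?h c"
        proof (cases "1 \<le> ht \<nu>' c")
          case True
          then have "0 < length \<nu>' \<and> c < \<nu>'!0" using ht_cell[OF pa'(1), of 0] by simp
          then have ne: "S' \<noteq> []" and cl: "c < length (S'!0)" using \<nu>'_def by auto
          have "S'!0!c = N + 2 - ht \<nu>' c" using IH \<open>0 < length \<nu>' \<and> c < \<nu>' ! 0\<close> by (simp add: LW_def)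
          then show ?thesis using colS[OF ne cl] hc by simp
        next
          case False
          then show ?thesis using hc x1 by simp
        qed
        show "?x = N + 2 - ?h c"
        proof (rule ccontr)
          assume "?x \<noteq> N + 2 - ?h c"
          then have lt: "?x < N + 2 - ?h c" using upper by simp
          define i where "i = ?x"
          have i1: "1 \<le> i" "i \<le> N" using x1 lt hc unfolding i_def by auto
          define W where "W = concat (rev S')"
          have tk: "take c row0 = map (\<lambda>c'. N + 2 - ?h c') [0..<c]"
            using less.IH ck k_def by (intro nth_equalityI) auto
          have decomp: "concat (rev (row0 # S')) = (W @ take c row0 @ [i]) @ drop (Suc c) row0"
            unfolding W_def i_def using ck k_def by (simp add: id_take_nth_drop[symmetric])
          have cnt: "count_list (W @ take c row0 @ [i]) i \<le> count_list (W @ take c row0 @ [i]) (Suc i)"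
            using Cons.prems(3) i1 decomp by blast
          have noSuc: "count_list (take c row0) (Suc i) = 0"
          proof -
            have "\<forall>z\<in>set (take c row0). z \<le> i"
            proof
              fix z assume "z \<in> set (take c row0)"
              then obtain j where "j < c" "z = row0!j" using ck k_def
                by (auto simp: in_set_conv_nth)
              then show "z \<le> i" unfolding i_def using srt ck k_def by (simp add: sorted_nth_mono)
            qed
            then have "Suc i \<notin> set (take c row0)" by fastforce
            then show ?thesis by (simp add: count_list_0_iff)
          qed
          have WC: "count_list W (Suc i) = count_list W i + card {c. ht \<nu>' c = N + 1 - i}"
            unfolding W_def count_concat_rev IH using LW_count[OF pa'(1) i1] .
          have sub: "{c'. ht \<nu>' c' = N + 1 - i} \<subseteq> {c'. c' < c \<and> N + 2 - ?h c' = i}"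
          proof
            fix c' assume "c' \<in> {c'. ht \<nu>' c' = N + 1 - i}"
            then have e: "ht \<nu>' c' = N + 1 - i" by simp
            have "Suc 0 \<le> ht \<nu>' c'" using e i1 by simp
            then have "0 < length \<nu>' \<and> c' < \<nu>'!0" using ht_cell[OF pa'(1), of 0 c'] by simp
            then have "c' < k" using pa'(2) nth_mem by fastforce
            then have hc': "?h c' = N + 2 - i" using e i1 by (simp add: ht_cons)
            have "c' < c"
            proof (rule ccontr)
              assume "\<not> c' < c"
              then have "?h c' \<le> ?h c" using ht_anti by simp
              then show False using hc' lt i_def by simp
            qed
            then show "c' \<in> {c'. c' < c \<and> N + 2 - ?h c' = i}" using hc' i1 by simp
          qed
          have "card {c'. ht \<nu>' c' = N + 1 - i} \<le> card {c'. c' < c \<and> N + 2 - ?h c' = i}"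
            by (rule card_mono[OF _ sub]) simp
          also have "\<dots> = count_list (take c row0) i" unfolding tk count_map_upt ..
          finally have "card {c'. ht \<nu>' c' = N + 1 - i} \<le> count_list (take c row0) i" .
          then show False using cnt WC noSuc by simp
        qed
      qed
    qed
  qed
  have "row0 = map (\<lambda>c. N + 2 - ?h c) [0..<k]"
    using row k_def by (intro nth_equalityI) auto
  then show ?case using nu IH LW_cons[OF pa] by simp
qed


lemma LW_ssyt: "is_partition \<nu> \<Longrightarrow> length \<nu> \<le> N \<Longrightarrow> ssyt N \<nu> (LW N \<nu>)"
  unfolding ssyt_def
proof (intro conjI ballI allI impI)
  assume pa: "is_partition \<nu>" and len: "length \<nu> \<le> N"
  show "map length (LW N \<nu>) = \<nu>" unfolding LW_def by (intro nth_equalityI) auto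
  fix row assume "row \<in> set (LW N \<nu>)"
  then obtain r where r: "r < length \<nu>" "row = map (\<lambda>c. N + 2 + r - ht \<nu> c) [0..<\<nu>!r]"
    unfolding LW_def by auto
  show "sorted row" unfolding r(2) sorted_iff_nth_mono
    by (auto intro!: diff_le_mono2 ht_anti)
  fix x assume "x \<in> set row"
  then obtain c where c: "c < \<nu>!r" "x = N + 2 + r - ht \<nu> c" using r by auto
  have "Suc r \<le> ht \<nu> c" using ht_cell[OF pa] r c by simp
  moreover have "ht \<nu> c \<le> N" using ht_le_len[of \<nu> c] len by simp
  ultimately show "1 \<le> x" "x \<le> N + 1" using c by arith+
next
  fix r c
  assume pa: "is_partition \<nu>" and len: "length \<nu> \<le> N"
    and a: "Suc r < length (LW N \<nu>)" "c < length (LW N \<nu> ! Suc r)"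
  have a': "Suc r < length \<nu>" "c < \<nu>!Suc r" using a unfolding LW_def by auto
  have "c < \<nu>!r" using a' part_mono[OF pa, of r "Suc r"] by simp
  moreover have "ht \<nu> c \<le> N" using ht_le_len[of \<nu> c] len by simp
  moreover have "Suc (Suc r) \<le> ht \<nu> c" using ht_cell[OF pa] a' by simp
  ultimately show "LW N \<nu> ! r ! c < LW N \<nu> ! Suc r ! c" using a' unfolding LW_def by simp
qed

lemma stuck_LW: "ssyt N \<nu> S \<Longrightarrow> is_partition \<nu> \<Longrightarrow> (\<forall>i\<in>{1..N}. Ftab i S = None) \<Longrightarrow> S = LW N \<nu>"
proof (rule LW_unique)
  assume st: "\<forall>i\<in>{1..N}. Ftab i S = None"
  show "\<forall>i. 1 \<le> i \<longrightarrow> i \<le> N \<longrightarrow> (\<forall>q rest. concat (rev S) = q @ rest \<longrightarrow> count_list q i \<le> count_list q (Suc i))"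
  proof (intro allI impI)
    fix i q rest assume "1 \<le> i" "i \<le> N" "concat (rev S) = q @ rest"
    then have "Ftab i S = None" using st by auto
    then have "hw i (q @ rest) 0 = None" using Ftab_None \<open>concat (rev S) = q @ rest\<close> by metis
    then show "count_list q i \<le> count_list q (Suc i)" using hw_None_count[of i q rest 0] by simp
  qed
qed

lemma LW_max:
  assumes pa: "is_partition \<nu>" and len: "length \<nu> \<le> N"
  shows "S \<in> Btab N \<nu> \<Longrightarrow> Ble N \<nu> S (LW N \<nu>)"
proof (induction "(N+1) * sum_list \<nu> - wt S" arbitrary: S rule: less_induct)
  case less
  have sy: "ssyt N \<nu> S" using less.prems unfolding Btab_def by simp
  show ?case
  proof (cases "\<forall>i\<in>{1..N}. Ftab i S = None")
    case True
    then have "S = LW N \<nu>" using stuck_LW sy pa by blast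
    then show ?thesis using less.prems unfolding Ble_def by simp
  next
    case False
    then obtain i S' where i: "i \<in> {1..N}" "Ftab i S = Some S'" by auto
    have sy': "ssyt N \<nu> S'" using Ftab_ssyt[OF sy pa _ _ i(2)] i(1) by simp
    have "wt S' = Suc (wt S)" using Ftab_wt[OF i(2)] .
    moreover have "wt S' \<le> (N+1) * sum_list \<nu>" using wt_bound[OF sy'] .
    ultimately have "(N+1) * sum_list \<nu> - wt S' < (N+1) * sum_list \<nu> - wt S" by simp
    then have "Ble N \<nu> S' (LW N \<nu>)" using less.hyps sy' unfolding Btab_def by blast
    moreover have "(S, S') \<in> Bstep N \<nu>" using less.prems i unfolding Bstep_def by blast
    ultimately show ?thesis using less.prems unfolding Ble_def
      by (blast intro: converse_rtrancl_into_rtrancl)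
  qed
qed



definition cat2 :: "nat list list \<Rightarrow> nat list list \<Rightarrow> nat list list" where
  "cat2 P R = map (\<lambda>(a, b). a @ b) (zip P R)"

definition good :: "nat \<Rightarrow> nat list list \<Rightarrow> nat list list \<Rightarrow> bool" where
  "good i P R \<longleftrightarrow> length P = length R \<and>
     (\<forall>c. hr i (cat2 P R) c = map_option (cat2 P) (hr i R c) \<and> cs i (concat (cat2 P R)) c = cs i (concat R) c)"

lemma cat2_Cons[simp]: "cat2 (p # P) (r # R) = (p @ r) # cat2 P R" unfolding cat2_def by simp
lemma cat2_Nil[simp]: "cat2 [] R = []" "cat2 P [] = []" unfolding cat2_def by auto

lemma cat2_append: "length P1 = length R1 \<Longrightarrow> cat2 (P1 @ P2) (R1 @ R2) = cat2 P1 R1 @ cat2 P2 R2"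
  unfolding cat2_def by simp

lemma length_cat2[simp]: "length (cat2 P R) = min (length P) (length R)" unfolding cat2_def by simp

lemma nth_cat2: "k < length P \<Longrightarrow> k < length R \<Longrightarrow> cat2 P R ! k = P!k @ R!k"
  unfolding cat2_def by simp

lemma rev_cat2: "length P = length R \<Longrightarrow> rev (cat2 P R) = cat2 (rev P) (rev R)"
  unfolding cat2_def by (simp add: zip_rev rev_map)

lemma hr_length: "hr i R c = Some R' \<Longrightarrow> length R' = length R"
  using hr_len by (metis length_map)

lemma good_append: "good i P1 R1 \<Longrightarrow> good i P2 R2 \<Longrightarrow> good i (P1 @ P2) (R1 @ R2)"
  unfolding good_def
proof (intro conjI allI)
  assume g1: "length P1 = length R1 \<and> (\<forall>c. hr i (cat2 P1 R1) c = map_option (cat2 P1) (hr i R1 c) \<and> cs i (concat (cat2 P1 R1)) c = cs i (concat R1) c)"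
    and g2: "length P2 = length R2 \<and> (\<forall>c. hr i (cat2 P2 R2) c = map_option (cat2 P2) (hr i R2 c) \<and> cs i (concat (cat2 P2 R2)) c = cs i (concat R2) c)"
  show "length (P1 @ P2) = length (R1 @ R2)" using g1 g2 by simp
  fix c
  have ca: "cat2 (P1 @ P2) (R1 @ R2) = cat2 P1 R1 @ cat2 P2 R2" using g1 by (simp add: cat2_append)
  show "cs i (concat (cat2 (P1 @ P2) (R1 @ R2))) c = cs i (concat (R1 @ R2)) c"
    unfolding ca using g1 g2 by (simp add: cs_append)
  have H1: "\<And>c. hr i (cat2 P1 R1) c = map_option (cat2 P1) (hr i R1 c)" using g1 by simp
  have H2: "\<And>c. hr i (cat2 P2 R2) c = map_option (cat2 P2) (hr i R2 c)" using g2 by simp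
  have C1: "\<And>c. cs i (concat (cat2 P1 R1)) c = cs i (concat R1) c" using g1 by simp
  show "hr i (cat2 (P1 @ P2) (R1 @ R2)) c = map_option (cat2 (P1 @ P2)) (hr i (R1 @ R2) c)"
  proof (cases "hr i R2 (cs i (concat R1) c)")
    case (Some a)
    then have "length a = length R2" by (rule hr_length)
    then show ?thesis unfolding ca hr_append H1 H2 C1 using Some g1 g2 by (simp add: cat2_append)
  next
    case None
    show ?thesis
    proof (cases "hr i R1 c")
      case (Some b)
      then have "length b = length R1" by (rule hr_length)
      then show ?thesis unfolding ca hr_append H1 H2 C1 using Some None g1 g2 by (simp add: cat2_append)
    next
      case None2: None
      then show ?thesis unfolding ca hr_append H1 H2 C1 using None by simp
    qed
  qed
qed

lemma good_neutral: "\<forall>p\<in>set P. \<forall>x\<in>set p. x \<noteq> i \<and> x \<noteq> Suc i \<Longrightarrow> length P = length R \<Longrightarrow> good i P R"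
proof (induction R arbitrary: P)
  case Nil
  then show ?case unfolding good_def by simp
next
  case (Cons r R)
  then obtain p P' where P: "P = p # P'" by (cases P) auto
  have IH: "good i P' R" using Cons P by simp
  have np: "\<forall>x\<in>set p. x \<noteq> i \<and> x \<noteq> Suc i" using Cons.prems P by simp
  show ?case unfolding good_def
  proof (intro conjI allI)
    show "length P = length (r # R)" using Cons.prems by simp
    fix c
    show "cs i (concat (cat2 P (r # R))) c = cs i (concat (r # R)) c"
      using IH np unfolding good_def P by (simp add: cs_append cs_neutral)
    show "hr i (cat2 P (r # R)) c = map_option (cat2 P) (hr i (r # R) c)"
      using IH np unfolding good_def P
      by (cases "hw i r c") (auto simp: cs_neutral_app hw_neutral_app split: option.splits)
  qed
qed

lemma count_rep: "count_list (replicate t x) x = t"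
  by (induction t) auto

lemma good_block: "i \<notin> set u \<Longrightarrow> good i [replicate t (Suc i), replicate t i] [u, v]"
  unfolding good_def
proof (intro conjI allI)
  assume u: "i \<notin> set u"
  fix c
  have c1: "cs i (replicate t (Suc i) @ u) c = cs i u c + t"
    using u by (simp add: cs_noi count_list_append count_rep)
  have c2: "cs i (replicate t i @ v) (cs i u c + t) = cs i v (cs i u c)"
    by (simp add: cs_append cs_rep_i)
  have h2: "hw i (replicate t i @ v) (cs i u c + t) = map_option (\<lambda>ys. replicate t i @ ys) (hw i v (cs i u c))"
    by (auto simp: hw_append cs_rep_i hw_rep_i split: option.splits)
  have h1: "hw i (replicate t (Suc i) @ u) c = None" using u by (simp add: hw_noi)
  show "cs i (concat (cat2 [replicate t (Suc i), replicate t i] [u, v])) c = cs i (concat [u, v]) c"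
    using c1 c2 by (simp add: cs_append)
  show "hr i (cat2 [replicate t (Suc i), replicate t i] [u, v]) c = map_option (cat2 [replicate t (Suc i), replicate t i]) (hr i [u, v] c)"
    using c1 c2 h1 h2 u by (auto simp: hw_noi split: option.splits)
qed simp



definition pads :: "nat \<Rightarrow> nat \<Rightarrow> nat list list" where
  "pads t l = map (\<lambda>j. replicate t (Suc j)) [0..<l]"

definition pad :: "nat \<Rightarrow> nat list list \<Rightarrow> nat list list" where
  "pad t T = cat2 (pads t (length T)) T"

lemma length_pads[simp]: "length (pads t l) = l" unfolding pads_def by simp
lemma length_pad[simp]: "length (pad t T) = length T" unfolding pad_def by simp
lemma nth_pad: "k < length T \<Longrightarrow> pad t T ! k = replicate t (Suc k) @ T!k"
  unfolding pad_def by (simp add: nth_cat2 pads_def)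

lemma rev_pads_nth: "k < l \<Longrightarrow> rev (pads t l) ! k = replicate t (l - k)"
  unfolding pads_def by (simp add: rev_nth Suc_diff_Suc)

lemma rev_pad: "rev (pad t T) = cat2 (rev (pads t (length T))) (rev T)"
  unfolding pad_def by (simp add: rev_cat2)

lemma drop_pad: "map (drop t) (pad t T) = T"
  by (intro nth_equalityI) (auto simp: nth_pad)

lemma pad_inj: "pad t T1 = pad t T2 \<Longrightarrow> T1 = T2"
proof -
  assume "pad t T1 = pad t T2"
  then have "map (drop t) (pad t T1) = map (drop t) (pad t T2)" by simp
  then show ?thesis by (simp add: drop_pad)
qed

lemma take2: "Suc k < length xs \<Longrightarrow> take 2 (drop k xs) = [xs!k, xs!Suc k]"
proof -
  assume a: "Suc k < length xs"
  have "drop k xs = xs!k # drop (Suc k) xs" using a by (simp add: Cons_nth_drop_Suc)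
  also have "drop (Suc k) xs = xs!Suc k # drop (Suc (Suc k)) xs" using a by (simp add: Cons_nth_drop_Suc)
  finally show ?thesis by (simp add: numeral_2_eq_2)
qed

lemma neutral_set: "(\<And>k. k < length P \<Longrightarrow> \<forall>x\<in>set (P!k). x \<noteq> i \<and> x \<noteq> Suc i) \<Longrightarrow> \<forall>p\<in>set P. \<forall>x\<in>set p. x \<noteq> i \<and> x \<noteq> Suc i"
  by (fastforce simp: in_set_conv_nth)

lemma pad_hr:
  assumes sy: "ssyt n \<nu> T" and pa: "is_partition \<nu>" and i: "1 \<le> i" "i \<le> n"
  shows "hr i (rev (pad t T)) 0 = (case hr i (rev T) 0 of Some R' \<Rightarrow> Some (cat2 (rev (pads t (length T))) R')
     | None \<Rightarrow> (if i = length T \<and> 0 < t then Some ((replicate (t-1) i @ Suc i # last T) # tl (rev (pad t T))) else None))"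
proof -
  define l where "l = length T"
  define P where "P = rev (pads t l)"
  define R where "R = rev T"
  have PR: "rev (pad t T) = cat2 P R" unfolding P_def R_def l_def by (rule rev_pad)
  have lP: "length P = l" "length R = l" unfolding P_def R_def l_def by auto
  have Pk: "\<And>k. k < l \<Longrightarrow> P!k = replicate t (l - k)" unfolding P_def by (rule rev_pads_nth)
  show ?thesis
  proof (cases "l < i")
    case True
    have "good i P R"
    proof (rule good_neutral[OF neutral_set])
      fix k assume "k < length P"
      then show "\<forall>x\<in>set (P!k). x \<noteq> i \<and> x \<noteq> Suc i" using Pk lP True by auto
    qed (use lP in simp)
    then have "hr i (cat2 P R) 0 = map_option (cat2 P) (hr i R 0)" unfolding good_def by simp
    then show ?thesis using PR True unfolding l_def P_def R_def by (auto split: option.splits)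
  next
    case False
    show ?thesis
    proof (cases "i = l")
      case True
      then have l1: "1 \<le> l" using i by simp
      define P2 where "P2 = tl P"
      define R2 where "R2 = tl R"
      have Pne: "P \<noteq> []" using lP l1 by auto
      have "hd P = replicate t i" using Pk[of 0] l1 True Pne by (simp add: hd_conv_nth)
      moreover have "P = hd P # tl P" using Pne by simp
      ultimately have P: "P = replicate t i # P2" unfolding P2_def by simp
      have Tne: "T \<noteq> []" using l1 l_def by auto
      have R: "R = last T # R2" using Tne unfolding R2_def R_def
        by (cases "rev T") (auto simp: hd_rev[symmetric])
      have g: "good i P2 R2"
      proof (rule good_neutral[OF neutral_set])
        fix k assume "k < length P2"
        then have "Suc k < l" using lP unfolding P2_def by simp
        then have "P2!k = replicate t (l - Suc k)" using Pk[of "Suc k"] lP unfolding P2_def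
          by (simp add: nth_tl)
        then show "\<forall>x\<in>set (P2!k). x \<noteq> i \<and> x \<noteq> Suc i" using True \<open>Suc k < l\<close> by auto
      qed (use lP in \<open>simp add: P2_def R2_def\<close>)
      have G1: "\<And>c. hr i (cat2 P2 R2) c = map_option (cat2 P2) (hr i R2 c)" using g unfolding good_def by simp
      have cs1: "cs i (replicate t i @ last T) 0 = cs i (last T) 0" by (simp add: cs_append cs_rep_i0)
      have hw1: "hw i (replicate t i @ last T) 0 = (case hw i (last T) 0 of Some zs \<Rightarrow> Some (replicate t i @ zs)
          | None \<Rightarrow> map_option (\<lambda>us. us @ last T) (hw i (replicate t i) 0))"
        by (simp add: hw_append cs_rep_i0)
      have hwr: "hw i (replicate t i) 0 = (if 0 < t then Some (replicate (t-1) i @ [Suc i]) else None)"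
        using hw_rep_i0[of i "t - 1"] by (cases t) auto
      have tlp: "tl (rev (pad t T)) = cat2 P2 R2" unfolding PR P R by simp
      have il: "i = length T" using True l_def by simp
      have L: "hr i (rev (pad t T)) 0 = (case map_option (cat2 P2) (hr i R2 (cs i (last T) 0)) of
           Some rs \<Rightarrow> Some ((replicate t i @ last T) # rs)
         | None \<Rightarrow> map_option (\<lambda>r'. r' # cat2 P2 R2) (hw i (replicate t i @ last T) 0))"
        unfolding PR P R by (simp only: cat2_Cons hr.simps G1 cs1)
      have Rr: "hr i (rev T) 0 = (case hr i R2 (cs i (last T) 0) of Some rs \<Rightarrow> Some (last T # rs)
         | None \<Rightarrow> map_option (\<lambda>r'. r' # R2) (hw i (last T) 0))"
      proof -
        have "hr i (rev T) 0 = hr i (last T # R2) 0" using R unfolding R_def by (rule arg_cong)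
        then show ?thesis by (simp only: hr.simps)
      qed
      have Pl: "rev (pads t (length T)) = replicate t i # P2" using P unfolding P_def l_def .
      show ?thesis
      proof (cases "hr i R2 (cs i (last T) 0)")
        case (Some rs)
        then show ?thesis unfolding L Rr Pl by simp
      next
        case None
        show ?thesis
        proof (cases "hw i (last T) 0")
          case (Some z)
          then show ?thesis unfolding L Rr Pl hw1 using None by simp
        next
          case None2: None
          then show ?thesis unfolding L Rr Pl hw1 hwr tlp using None il by auto
        qed
      qed
    next
      case False2: False
      then have il: "i < l" using False by simp
      define a where "a = l - 1 - i"
      have al: "Suc a < l" "l - a = Suc i" "l - Suc a = i" using il i unfolding a_def by auto
      have g1: "good i (take a P) (take a R)"
      proof (rule good_neutral[OF neutral_set])
        fix k assume "k < length (take a P)"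
        then have "k < a" "k < l" using lP by auto
        then have "(take a P)!k = replicate t (l - k)" using Pk by simp
        moreover have "l - k > Suc i" using \<open>k < a\<close> al by simp
        ultimately show "\<forall>x\<in>set ((take a P)!k). x \<noteq> i \<and> x \<noteq> Suc i" by auto
      qed (use lP in simp)
      have g3: "good i (drop (a+2) P) (drop (a+2) R)"
      proof (rule good_neutral[OF neutral_set])
        fix k assume "k < length (drop (a+2) P)"
        then have "a + 2 + k < l" using lP by auto
        then have "(drop (a+2) P)!k = replicate t (l - (a + 2 + k))" using Pk lP by simp
        moreover have "l - (a + 2 + k) < i" using \<open>a + 2 + k < l\<close> al by simp
        ultimately show "\<forall>x\<in>set ((drop (a+2) P)!k). x \<noteq> i \<and> x \<noteq> Suc i" by auto
      qed (use lP in simp)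
      have tP: "take 2 (drop a P) = [replicate t (Suc i), replicate t i]"
        using take2[of a P] lP al Pk by simp
      have tR: "take 2 (drop a R) = [T!i, T!(i - 1)]"
      proof -
        have "R!a = T!(l - Suc a)" "R!Suc a = T!(l - Suc (Suc a))" using al unfolding R_def l_def
          by (auto simp: rev_nth)
        moreover have "l - Suc (Suc a) = i - 1" using al by simp
        ultimately have "R!a = T!i" "R!Suc a = T!(i-1)" using al by auto
        then show ?thesis using take2[of a R] lP al by simp
      qed
      have noi: "i \<notin> set (T!i)"
      proof
        assume "i \<in> set (T!i)"
        then obtain c where "c < length (T!i)" "T!i!c = i" by (auto simp: in_set_conv_nth)
        then show False using ssyt_row_ge[OF pa sy, of i c] il l_def by simp
      qed
      have g2: "good i (take 2 (drop a P)) (take 2 (drop a R))"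
        unfolding tP tR by (rule good_block[OF noi])
      have dd: "\<And>xs::nat list list. xs = take a xs @ take 2 (drop a xs) @ drop (a+2) xs"
      proof -
        fix xs :: "nat list list"
        have "take 2 (drop a xs) @ drop (a+2) xs = drop a xs"
          using append_take_drop_id[of 2 "drop a xs"] by (simp add: add.commute)
        then show "xs = take a xs @ take 2 (drop a xs) @ drop (a+2) xs" by simp
      qed
      have "good i (take a P @ take 2 (drop a P) @ drop (a+2) P) (take a R @ take 2 (drop a R) @ drop (a+2) R)"
        by (intro good_append g1 g2 g3)
      then have "good i P R" using dd[of P] dd[of R] by simp
      then have "hr i (cat2 P R) 0 = map_option (cat2 P) (hr i R 0)" unfolding good_def by simp
      then show ?thesis using PR False2 unfolding l_def P_def R_def by (auto split: option.splits)
    qed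
  qed
qed



lemma pad_F1:
  assumes sy: "ssyt n \<nu> T" and pa: "is_partition \<nu>" and i: "1 \<le> i" "i \<le> n"
    and F: "Ftab i T = Some T'"
  shows "Ftab i (pad t T) = Some (pad t T')"
proof -
  obtain R' where R': "hr i (rev T) 0 = Some R'" "T' = rev R'" using F by (auto simp: Ftab_hr)
  have lR: "length R' = length T" using hr_length[OF R'(1)] by simp
  have "hr i (rev (pad t T)) 0 = Some (cat2 (rev (pads t (length T))) R')"
    using pad_hr[OF sy pa i, of t] R'(1) by simp
  then have "Ftab i (pad t T) = Some (rev (cat2 (rev (pads t (length T))) R'))" by (simp add: Ftab_hr)
  also have "rev (cat2 (rev (pads t (length T))) R') = cat2 (pads t (length T)) T'"
    using lR R'(2) by (simp add: rev_cat2)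
  also have "\<dots> = pad t T'" unfolding pad_def using lR R'(2) by simp
  finally show ?thesis .
qed

lemma pad_F2:
  assumes sy: "ssyt n \<nu> T" and pa: "is_partition \<nu>" and i: "1 \<le> i" "i \<le> n"
    and F: "Ftab i (pad t T) = Some (pad t T')"
  shows "Ftab i T = Some T'"
proof (cases "hr i (rev T) 0")
  case (Some R')
  then have "Ftab i T = Some (rev R')" by (simp add: Ftab_hr)
  then have "Ftab i (pad t T) = Some (pad t (rev R'))" using pad_F1[OF sy pa i] by blast
  then have "pad t (rev R') = pad t T'" using F by simp
  then show ?thesis using \<open>Ftab i T = Some (rev R')\<close> pad_inj by blast
next
  case None
  define X where "X = (replicate (t-1) i @ Suc i # last T) # tl (rev (pad t T))"
  have H: "hr i (rev (pad t T)) 0 = (if i = length T \<and> 0 < t then Some X else None)"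
    using pad_hr[OF sy pa i, of t] None unfolding X_def by simp
  show ?thesis
  proof (cases "i = length T \<and> 0 < t")
    case False
    then have "hr i (rev (pad t T)) 0 = None" using H by simp
    then have "Ftab i (pad t T) = None" by (simp add: Ftab_hr)
    then show ?thesis using F by simp
  next
    case True
    then have "pad t T' = rev X" using F H by (simp add: Ftab_hr)
    moreover have lT: "length T \<ge> 1" using True i by simp
    ultimately have lT': "length T' = length T"
    proof -
      have "length (pad t T') = length (rev X)" using \<open>pad t T' = rev X\<close> by simp
      then show ?thesis using lT unfolding X_def by simp
    qed
    have "last (pad t T') = hd X" using \<open>pad t T' = rev X\<close> unfolding X_def by (simp add: last_rev)
    also have "last (pad t T') = pad t T' ! (length T - 1)"
    proof -
      have "T \<noteq> []" using lT by auto
      then have "pad t T' \<noteq> []" using lT' by (metis length_pad length_0_conv)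
      then show ?thesis using lT' by (simp add: last_conv_nth)
    qed
    also have "\<dots> = replicate t i @ T'!(i - 1)" using lT lT' True by (simp add: nth_pad)
    finally have e: "replicate t i @ T'!(i - 1) = replicate (t-1) i @ Suc i # last T" unfolding X_def by simp
    have "(replicate t i @ T'!(i - 1)) ! (t - 1) = i" using True by (simp add: nth_append)
    moreover have "(replicate (t-1) i @ Suc i # last T) ! (t - 1) = Suc i" by (simp add: nth_append)
    ultimately show ?thesis using e by simp
  qed
qed

lemma pad_ssyt:
  assumes sy: "ssyt n \<nu> T" and pa: "is_partition \<nu>" and len: "length \<nu> \<le> n"
  shows "ssyt n (map (\<lambda>x. x + t) \<nu>) (pad t T)"
proof -
  have sh: "length T = length \<nu>" "\<And>r. r < length T \<Longrightarrow> length (T!r) = \<nu>!r" using ssyt_shape[OF sy] by auto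
  have ent: "\<forall>row\<in>set T. \<forall>x\<in>set row. 1 \<le> x \<and> x \<le> n + 1" and srt: "\<forall>row\<in>set T. sorted row"
    and colT: "\<forall>r c. Suc r < length T \<longrightarrow> c < length (T ! Suc r) \<longrightarrow> T ! r ! c < T ! Suc r ! c"
    using sy unfolding ssyt_def by auto
  show ?thesis unfolding ssyt_def
  proof (intro conjI ballI allI impI)
    show "map length (pad t T) = map (\<lambda>x. x + t) \<nu>"
      using sh by (intro nth_equalityI) (auto simp: nth_pad)
  next
    fix row x assume "row \<in> set (pad t T)" "x \<in> set row"
    then obtain k where k: "k < length T" "row = replicate t (Suc k) @ T!k" by (auto simp: in_set_conv_nth nth_pad)
    have "Suc k \<le> n" using k sh len by simp
    moreover have "T!k \<in> set T" using k by simp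
    ultimately show "1 \<le> x" "x \<le> n + 1" using ent k \<open>x \<in> set row\<close> by (auto split: if_splits)
  next
    fix row assume "row \<in> set (pad t T)"
    then obtain k where k: "k < length T" "row = replicate t (Suc k) @ T!k" by (auto simp: in_set_conv_nth nth_pad)
    have "\<forall>x\<in>set (T!k). Suc k \<le> x" using ssyt_row_ge[OF pa sy k(1)] by (auto simp: in_set_conv_nth)
    then show "sorted row" using k srt by (auto simp: sorted_append)
  next
    fix r c assume a: "Suc r < length (pad t T)" "c < length (pad t T ! Suc r)"
    have a': "Suc r < length T" "c < t + length (T ! Suc r)" using a by (auto simp: nth_pad)
    have lr: "length (T!Suc r) \<le> length (T!r)" using sh a' part_mono[OF pa, of r "Suc r"] by simp
    show "pad t T ! r ! c < pad t T ! Suc r ! c"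
    proof (cases "c < t")
      case True
      then show ?thesis using a' by (simp add: nth_pad nth_append)
    next
      case False
      then have "c - t < length (T ! Suc r)" using a' by simp
      then have "T!r!(c-t) < T!Suc r!(c-t)" using colT a' by blast
      then show ?thesis using a' False by (simp add: nth_pad nth_append)
    qed
  qed
qed

lemma down_closed:
  assumes sy: "ssyt n (map (\<lambda>x. x + t) \<nu>) S" and lY: "length Y = length \<nu>"
    and i: "1 \<le> i" and F: "Ftab i S = Some (pad t Y)"
  shows "\<exists>X. ssyt n \<nu> X \<and> S = pad t X"
proof -
  obtain r p s where rps: "r < length S" "S!r = p @ i # s" "pad t Y = S[r := p @ Suc i # s]"
    using Ftab_split[OF F] by blast
  have sh: "length S = length \<nu>" "\<And>k. k < length S \<Longrightarrow> length (S!k) = \<nu>!k + t"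
    using ssyt_shape[OF sy] by auto
  have colS: "\<forall>r c. Suc r < length S \<longrightarrow> c < length (S ! Suc r) \<longrightarrow> S ! r ! c < S ! Suc r ! c"
    using sy unfolding ssyt_def by auto
  have lS: "length S = length Y" using sh lY by simp
  have Sk: "\<And>k. k < length S \<Longrightarrow> k \<noteq> r \<Longrightarrow> S!k = replicate t (Suc k) @ Y!k"
  proof -
    fix k assume "k < length S" "k \<noteq> r"
    then have "pad t Y ! k = S!k" using rps(3) by simp
    then show "S!k = replicate t (Suc k) @ Y!k" using \<open>k < length S\<close> lS by (simp add: nth_pad)
  qed
  have Yr: "replicate t (Suc r) @ Y!r = p @ Suc i # s" using rps(1,3) lS nth_pad[of r Y t] by simp
  have pt: "t \<le> length p"
  proof (rule ccontr)
    assume "\<not> t \<le> length p"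
    then have lp: "length p < t" by simp
    have "(replicate t (Suc r) @ Y!r) ! length p = Suc r" using lp by (simp add: nth_append)
    then have ri: "r = i" using Yr by simp
    then have r1: "1 \<le> r" using i by simp
    have "S!(r-1) = replicate t r @ Y!(r-1)" using Sk[of "r-1"] rps(1) r1 by simp
    then have "S!(r-1)!length p = r" using lp by (simp add: nth_append)
    moreover have "S!r!length p = i" using rps(2) by simp
    moreover have "S!(r-1)!length p < S!Suc (r-1)!length p"
    proof -
      have "Suc (r-1) < length S" "length p < length (S!Suc (r-1))" using rps(1,2) r1 by auto
      then show ?thesis using colS by blast
    qed
    ultimately show False using ri r1 by simp
  qed
  have pref: "\<And>k. k < length S \<Longrightarrow> S!k = replicate t (Suc k) @ drop t (S!k)"
  proof -
    fix k assume k: "k < length S"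
    show "S!k = replicate t (Suc k) @ drop t (S!k)"
    proof (cases "k = r")
      case False
      then show ?thesis using Sk k by simp
    next
      case True
      have "take t (S!k) = take t p" using rps(2) pt True by simp
      also have "\<dots> = take t (p @ Suc i # s)" using pt by simp
      also have "\<dots> = replicate t (Suc k)" using Yr True by (metis append_eq_conv_conj length_replicate)
      finally show ?thesis by (metis append_take_drop_id)
    qed
  qed
  define X where "X = map (drop t) S"
  have SX: "S = pad t X"
    unfolding X_def using pref by (intro nth_equalityI) (auto simp: nth_pad)
  have "ssyt n \<nu> X"
    unfolding ssyt_def
  proof (intro conjI ballI allI impI)
    show "map length X = \<nu>" unfolding X_def using sh by (intro nth_equalityI) auto
  next
    fix row x assume "row \<in> set X" "x \<in> set row"
    then obtain k where "k < length S" "row = drop t (S!k)" unfolding X_def by (auto simp: in_set_conv_nth)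
    then have "x \<in> set (drop t (S!k))" using \<open>x \<in> set row\<close> by simp
    then have "x \<in> set (S!k)" by (rule in_set_dropD)
    moreover have "S!k \<in> set S" using \<open>k < length S\<close> by simp
    ultimately show "1 \<le> x" "x \<le> n + 1" using sy unfolding ssyt_def by auto
  next
    fix row assume "row \<in> set X"
    then obtain k where "k < length S" "row = drop t (S!k)" unfolding X_def by (auto simp: in_set_conv_nth)
    moreover have "sorted (S!k)" using sy \<open>k < length S\<close> unfolding ssyt_def by auto
    ultimately show "sorted row" by (simp add: sorted_wrt_drop)
  next
    fix r c assume a: "Suc r < length X" "c < length (X ! Suc r)"
    then have a': "Suc r < length S" "t + c < length (S ! Suc r)" unfolding X_def by auto
    then have "S!r!(t+c) < S!Suc r!(t+c)" using colS by blast
    moreover have "t \<le> length (S!r)" "t \<le> length (S!Suc r)" using sh a' by auto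
    ultimately show "X ! r ! c < X ! Suc r ! c" unfolding X_def using a' by simp
  qed
  then show ?thesis using SX by blast
qed



lemma lattice_transfer:
  assumes iso: "order_iso_onto f A leA (principal_ideal B leB T) leB"
    and lat: "is_lattice B leB" and TB: "T \<in> B"
    and tr: "\<And>a b c. a \<in> B \<Longrightarrow> b \<in> B \<Longrightarrow> c \<in> B \<Longrightarrow> leB a b \<Longrightarrow> leB b c \<Longrightarrow> leB a c"
  shows "is_lattice A leA"
proof -
  let ?I = "principal_ideal B leB T"
  have bij: "bij_betw f A ?I" and ord: "\<And>x y. x \<in> A \<Longrightarrow> y \<in> A \<Longrightarrow> leA x y \<longleftrightarrow> leB (f x) (f y)"
    using iso unfolding order_iso_onto_def by auto
  have fI: "\<And>x. x \<in> A \<Longrightarrow> f x \<in> B \<and> leB (f x) T"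
    using bij unfolding bij_betw_def principal_ideal_def by auto
  have surjI: "\<And>z. z \<in> B \<Longrightarrow> leB z T \<Longrightarrow> \<exists>z'\<in>A. f z' = z"
  proof -
    fix z assume "z \<in> B" "leB z T"
    then have "z \<in> ?I" unfolding principal_ideal_def by simp
    then have "z \<in> f ` A" using bij unfolding bij_betw_def by simp
    then show "\<exists>z'\<in>A. f z' = z" by auto
  qed
  show ?thesis unfolding is_lattice_def
  proof (intro ballI conjI)
    fix x y assume x: "x \<in> A" and y: "y \<in> A"
    have fx: "f x \<in> B" and fy: "f y \<in> B" using fI x y by auto
    have LL: "(\<exists>z\<in>B. leB (f x) z \<and> leB (f y) z \<and> (\<forall>w\<in>B. leB (f x) w \<and> leB (f y) w \<longrightarrow> leB z w)) \<and>
      (\<exists>z\<in>B. leB z (f x) \<and> leB z (f y) \<and> (\<forall>w\<in>B. leB w (f x) \<and> leB w (f y) \<longrightarrow> leB w z))"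
      using lat fx fy unfolding is_lattice_def by blast
    obtain z where z: "z \<in> B" "leB (f x) z" "leB (f y) z" "\<forall>w\<in>B. leB (f x) w \<and> leB (f y) w \<longrightarrow> leB z w"
      using LL by blast
    have "leB z T" using z(4) fI x y TB by blast
    then obtain z' where z': "z' \<in> A" "f z' = z" using surjI z(1) by blast
    show "\<exists>z\<in>A. leA x z \<and> leA y z \<and> (\<forall>w\<in>A. leA x w \<and> leA y w \<longrightarrow> leA z w)"
    proof (intro bexI[of _ z'] conjI ballI impI)
      show "leA x z'" using ord x z' z by simp
      show "leA y z'" using ord y z' z by simp
      fix w assume "w \<in> A" "leA x w \<and> leA y w"
      then show "leA z' w" using ord x y z' z fI by auto
    qed (rule z'(1))
    obtain m where m: "m \<in> B" "leB m (f x)" "leB m (f y)" "\<forall>w\<in>B. leB w (f x) \<and> leB w (f y) \<longrightarrow> leB w m"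
      using LL by blast
    have "leB m T" using tr[OF m(1) _ TB m(2)] fI x by blast
    then obtain m' where m': "m' \<in> A" "f m' = m" using surjI m(1) by blast
    show "\<exists>z\<in>A. leA z x \<and> leA z y \<and> (\<forall>w\<in>A. leA w x \<and> leA w y \<longrightarrow> leA w z)"
    proof (intro bexI[of _ m'] conjI ballI impI)
      show "leA m' x" using ord x m' m by simp
      show "leA m' y" using ord y m' m by simp
      fix w assume "w \<in> A" "leA w x \<and> leA w y"
      then show "leA w m'" using ord x y m' m fI by auto
    qed (rule m'(1))
  qed
qed

lemma chain_fwd:
  assumes pa: "is_partition \<nu>" and len: "length \<nu> \<le> n"
  shows "(a, b) \<in> (Bstep n \<nu>)\<^sup>* \<Longrightarrow> (pad t a, pad t b) \<in> (Bstep n (map (\<lambda>x. x + t) \<nu>))\<^sup>*"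
proof (induction rule: rtrancl_induct)
  case base
  then show ?case by simp
next
  case (step b c)
  then obtain i where i: "b \<in> Btab n \<nu>" "i \<in> {1..n}" "Ftab i b = Some c" unfolding Bstep_def by auto
  have sb: "ssyt n \<nu> b" using i(1) unfolding Btab_def by simp
  have "(pad t b, pad t c) \<in> Bstep n (map (\<lambda>x. x + t) \<nu>)"
  proof -
    have "1 \<le> i" "i \<le> n" using i(2) by auto
    then have "Ftab i (pad t b) = Some (pad t c)" using pad_F1[OF sb pa _ _ i(3)] by blast
    then show ?thesis unfolding Bstep_def Btab_def using pad_ssyt[OF sb pa len] i(2) by blast
  qed
  then show ?case using step.IH by simp
qed

lemma chain_bwd:
  assumes pa: "is_partition \<nu>" and len: "length \<nu> \<le> n"
  shows "(X, Y) \<in> (Bstep n (map (\<lambda>x. x + t) \<nu>))\<^sup>* \<Longrightarrow> Y = pad t y \<Longrightarrow> y \<in> Btab n \<nu> \<Longrightarrow>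
     \<exists>x. x \<in> Btab n \<nu> \<and> X = pad t x \<and> (x, y) \<in> (Bstep n \<nu>)\<^sup>*"
proof (induction arbitrary: y rule: rtrancl_induct)
  case base
  then show ?case by blast
next
  case (step B C)
  then obtain i where i: "B \<in> Btab n (map (\<lambda>x. x + t) \<nu>)" "i \<in> {1..n}" "Ftab i B = Some (pad t y)"
    unfolding Bstep_def by auto
  have ly: "length y = length \<nu>" using step.prems(2) ssyt_shape unfolding Btab_def by auto
  obtain b where b: "ssyt n \<nu> b" "B = pad t b"
    using down_closed[OF _ ly _ i(3)] i unfolding Btab_def by auto
  have Fb: "Ftab i b = Some y" using pad_F2[OF b(1) pa _ _, of i t y] i b(2) by auto
  obtain x where x: "x \<in> Btab n \<nu>" "X = pad t x" "(x, b) \<in> (Bstep n \<nu>)\<^sup>*"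
    using step.IH[OF b(2)] b(1) unfolding Btab_def by auto
  have "(b, y) \<in> Bstep n \<nu>" unfolding Bstep_def Btab_def using b(1) i(2) Fb by auto
  then show ?case using x by (blast intro: rtrancl.rtrancl_into_rtrancl)
qed

theorem lemma5p2:
  fixes lam :: "nat list" and t n :: nat
  assumes "is_partition lam" and "lam \<noteq> []"
    and "t < last lam"
    and "length lam \<le> n"
  defines "mu \<equiv> map (\<lambda>x. x - t) lam"
  shows "(\<exists>T\<in>Btab n lam. \<exists>f. order_iso_onto f (Btab n mu) (Ble n mu)
            (principal_ideal (Btab n lam) (Ble n lam) T) (Ble n lam))
       \<and> (\<not> is_lattice (Btab n mu) (Ble n mu) \<longrightarrow> \<not> is_lattice (Btab n lam) (Ble n lam))"
proof -
  note pl = assms(1)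
  have ge: "\<forall>x\<in>set lam. t < x"
  proof
    fix x assume "x \<in> set lam"
    then obtain k where k: "k < length lam" "x = lam!k" by (auto simp: in_set_conv_nth)
    have "last lam = lam!(length lam - 1)" using assms(2) by (simp add: last_conv_nth)
    moreover have "lam!(length lam - 1) \<le> lam!k" using part_mono[OF pl, of k "length lam - 1"] k by simp
    ultimately show "t < x" using k assms(3) by simp
  qed
  have lam_eq: "lam = map (\<lambda>x. x + t) mu" unfolding mu_def
  proof (intro nth_equalityI)
    fix k assume "k < length lam"
    then have "t < lam!k" using ge nth_mem by blast
    then show "lam ! k = map (\<lambda>x. x + t) (map (\<lambda>x. x - t) lam) ! k" using \<open>k < length lam\<close> by simp
  qed simp
  have pmu: "is_partition mu"
    unfolding is_partition_def mu_def
  proof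
    show "\<forall>x\<in>set (map (\<lambda>x. x - t) lam). 0 < x" using ge by auto
    have "sorted_wrt (\<ge>) lam" using pl unfolding is_partition_def by simp
    then show "sorted_wrt (\<ge>) (map (\<lambda>x. x - t) lam)"
      unfolding sorted_wrt_map by (rule sorted_wrt_mono_rel[rotated]) (simp add: diff_le_mono)
  qed
  have lmu: "length mu \<le> n" unfolding mu_def using assms(4) by simp
  define M where "M = LW n mu"
  define T0 where "T0 = pad t M"
  have MB: "M \<in> Btab n mu" unfolding M_def Btab_def using LW_ssyt[OF pmu lmu] by simp
  have padB: "\<And>S. S \<in> Btab n mu \<Longrightarrow> pad t S \<in> Btab n lam"
    unfolding Btab_def using pad_ssyt[OF _ pmu lmu] lam_eq by auto
  have T0B: "T0 \<in> Btab n lam" unfolding T0_def using padB MB .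
  have fwd: "\<And>a b. (a, b) \<in> (Bstep n mu)\<^sup>* \<Longrightarrow> (pad t a, pad t b) \<in> (Bstep n lam)\<^sup>*"
  proof -
    fix a b assume "(a, b) \<in> (Bstep n mu)\<^sup>*"
    from chain_fwd[OF pmu lmu this, of t] show "(pad t a, pad t b) \<in> (Bstep n lam)\<^sup>*"
      using lam_eq by simp
  qed
  have bwd: "\<And>X y. (X, pad t y) \<in> (Bstep n lam)\<^sup>* \<Longrightarrow> y \<in> Btab n mu \<Longrightarrow>
      \<exists>x. x \<in> Btab n mu \<and> X = pad t x \<and> (x, y) \<in> (Bstep n mu)\<^sup>*"
  proof -
    fix X y assume a: "(X, pad t y) \<in> (Bstep n lam)\<^sup>*" "y \<in> Btab n mu"
    have "(X, pad t y) \<in> (Bstep n (map (\<lambda>x. x + t) mu))\<^sup>*" using a(1) lam_eq by simp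
    from chain_bwd[OF pmu lmu this refl a(2)]
    show "\<exists>x. x \<in> Btab n mu \<and> X = pad t x \<and> (x, y) \<in> (Bstep n mu)\<^sup>*" .
  qed
  have iso: "order_iso_onto (pad t) (Btab n mu) (Ble n mu) (principal_ideal (Btab n lam) (Ble n lam) T0) (Ble n lam)"
    unfolding order_iso_onto_def
  proof (intro conjI ballI)
    show "bij_betw (pad t) (Btab n mu) (principal_ideal (Btab n lam) (Ble n lam) T0)"
      unfolding bij_betw_def
    proof
      show "inj_on (pad t) (Btab n mu)" by (rule inj_onI) (rule pad_inj)
      show "pad t ` Btab n mu = principal_ideal (Btab n lam) (Ble n lam) T0"
      proof (intro set_eqI iffI)
        fix X assume "X \<in> pad t ` Btab n mu"
        then obtain S where S: "S \<in> Btab n mu" "X = pad t S" by blast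
        have "Ble n mu S M" unfolding M_def using LW_max[OF pmu lmu S(1)] .
        then have "(S, M) \<in> (Bstep n mu)\<^sup>*" unfolding Ble_def by simp
        then have "(X, T0) \<in> (Bstep n lam)\<^sup>*" using fwd S unfolding T0_def by simp
        then show "X \<in> principal_ideal (Btab n lam) (Ble n lam) T0"
          unfolding principal_ideal_def Ble_def using padB S T0B by simp
      next
        fix X assume "X \<in> principal_ideal (Btab n lam) (Ble n lam) T0"
        then have "(X, pad t M) \<in> (Bstep n lam)\<^sup>*" unfolding principal_ideal_def Ble_def T0_def by simp
        then obtain x where "x \<in> Btab n mu" "X = pad t x" using bwd MB by blast
        then show "X \<in> pad t ` Btab n mu" by blast
      qed
    qed
  next
    fix x y assume x: "x \<in> Btab n mu" and y: "y \<in> Btab n mu"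
    show "Ble n mu x y \<longleftrightarrow> Ble n lam (pad t x) (pad t y)"
    proof
      assume "Ble n mu x y"
      then show "Ble n lam (pad t x) (pad t y)" unfolding Ble_def using fwd padB x y by simp
    next
      assume "Ble n lam (pad t x) (pad t y)"
      then have "(pad t x, pad t y) \<in> (Bstep n lam)\<^sup>*" unfolding Ble_def by simp
      then obtain x' where "x' \<in> Btab n mu" "pad t x = pad t x'" "(x', y) \<in> (Bstep n mu)\<^sup>*"
        using bwd y by blast
      then show "Ble n mu x y" unfolding Ble_def using x y pad_inj by blast
    qed
  qed
  have tr: "\<And>a b c. a \<in> Btab n lam \<Longrightarrow> b \<in> Btab n lam \<Longrightarrow> c \<in> Btab n lam \<Longrightarrow>
     Ble n lam a b \<Longrightarrow> Ble n lam b c \<Longrightarrow> Ble n lam a c"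
    unfolding Ble_def by (blast intro: rtrancl_trans)
  show ?thesis
  proof
    show "\<exists>T\<in>Btab n lam. \<exists>f. order_iso_onto f (Btab n mu) (Ble n mu)
            (principal_ideal (Btab n lam) (Ble n lam) T) (Ble n lam)"
      using iso T0B by blast
    show "\<not> is_lattice (Btab n mu) (Ble n mu) \<longrightarrow> \<not> is_lattice (Btab n lam) (Ble n lam)"
    proof (intro impI notI)
      assume nm: "\<not> is_lattice (Btab n mu) (Ble n mu)" and L: "is_lattice (Btab n lam) (Ble n lam)"
      have "is_lattice (Btab n mu) (Ble n mu)"
      proof (rule lattice_transfer[OF iso L T0B])
        fix a b c assume "a \<in> Btab n lam" "b \<in> Btab n lam" "c \<in> Btab n lam" "Ble n lam a b" "Ble n lam b c"
        then show "Ble n lam a c" by (rule tr)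
      qed
      then show False using nm by simp
    qed
  qed
qed


end
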